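(* Every cycle graph $C_n$ with $n>3$ vertices is a skeleton.
   Context: For simple graphs $G$ and $H$, $H$ is a skeletal of $G$ if there is a surjective map $\phi:V(G)\to V(H)$ such that for all distinct vertices $a,b$ of $G$: $a$ and $b$ are adjacent in $G$ if and only if $\phi(a)=\phi(b)$ or $\phi(a)$ and $\phi(b)$ are adjacent in $H$. A skeletal $H$ of $G$ under $\phi$ is proper if $|\phi^{-1}(v)|\ge 2$ for at least one vertex $v$ of $H$. A graph is a skeleton if it has no proper skeletal. *)

theory Defs
  imports Main
begin

definition simple_graph :: "'a set \<Rightarrow> ('a \<Rightarrow> 'a \<Rightarrow> bool) \<Rightarrow> bool" where
  "simple_graph V E \<longleftrightarrow> finite V \<and> (\<forall>x y. E x y \<longrightarrow> x \<in> V \<and> y \<in> V)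
     \<and> (\<forall>x y. E x y \<longrightarrow> E y x) \<and> (\<forall>x. \<not> E x x)"

definition skeletal_via ::
  "'a set \<Rightarrow> ('a \<Rightarrow> 'a \<Rightarrow> bool) \<Rightarrow> 'b set \<Rightarrow> ('b \<Rightarrow> 'b \<Rightarrow> bool) \<Rightarrow> ('a \<Rightarrow> 'b) \<Rightarrow> bool" where
  "skeletal_via V E W F \<phi> \<longleftrightarrow> simple_graph W F \<and> \<phi> ` V = W \<and>
     (\<forall>a\<in>V. \<forall>b\<in>V. a \<noteq> b \<longrightarrow> (E a b \<longleftrightarrow> \<phi> a = \<phi> b \<or> F (\<phi> a) (\<phi> b)))"

definition proper_skeletal_via ::
  "'a set \<Rightarrow> ('a \<Rightarrow> 'a \<Rightarrow> bool) \<Rightarrow> 'b set \<Rightarrow> ('b \<Rightarrow> 'b \<Rightarrow> bool) \<Rightarrow> ('a \<Rightarrow> 'b) \<Rightarrow> bool" where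
  "proper_skeletal_via V E W F \<phi> \<longleftrightarrow> skeletal_via V E W F \<phi> \<and>
     (\<exists>v\<in>W. card {a\<in>V. \<phi> a = v} \<ge> 2)"

text \<open>Since a skeletal has at most
  |V| vertices, it suffices (up to isomorphism) to let skeletals range over graphs whose
  vertex type is the vertex type of G.\<close>
definition skeleton :: "'a set \<Rightarrow> ('a \<Rightarrow> 'a \<Rightarrow> bool) \<Rightarrow> bool" where
  "skeleton V E \<longleftrightarrow> \<not> (\<exists>(W::'a set) F \<phi>. proper_skeletal_via V E W F \<phi>)"

definition cycle_adj :: "nat \<Rightarrow> nat \<Rightarrow> nat \<Rightarrow> bool" where
  "cycle_adj n i j \<longleftrightarrow> i < n \<and> j < n \<and> i \<noteq> j \<and> (j = (i + 1) mod n \<or> i = (j + 1) mod n)"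

end

theory Submission
  imports Defs
begin

lemma mod_succ: "i < (n::nat) \<Longrightarrow> (i + 1) mod n = (if i + 1 = n then 0 else i + 1)"
  by auto

lemma cyc_char:
  assumes "n > 3"
  shows "cycle_adj n i j \<longleftrightarrow> i < n \<and> j < n \<and>
     (j = i + 1 \<or> i = j + 1 \<or> (i = 0 \<and> j = n - 1) \<or> (j = 0 \<and> i = n - 1))"
proof (cases "i < n \<and> j < n")
  case True
  have 1: "(i + 1) mod n = (if i + 1 = n then 0 else i + 1)" using True mod_succ by blast
  have 2: "(j + 1) mod n = (if j + 1 = n then 0 else j + 1)" using True mod_succ by blast
  show ?thesis using assms True unfolding cycle_adj_def 1 2 by (simp split: if_split) linarith
next
  case False
  then show ?thesis unfolding cycle_adj_def by auto
qed

lemma witness: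
  assumes "n > 3" "cycle_adj n a b"
  shows "\<exists>c<n. c \<noteq> a \<and> c \<noteq> b \<and> cycle_adj n a c \<and> \<not> cycle_adj n b c"
proof -
  have ab: "a < n" "b < n" "b = a + 1 \<or> a = b + 1 \<or> (a = 0 \<and> b = n - 1) \<or> (b = 0 \<and> a = n - 1)"
    using assms cyc_char by auto
  show ?thesis
  proof (cases "b = a + 1 \<or> (a = n - 1 \<and> b = 0)")
    case True
    define c where "c = (if a = 0 then n - 1 else a - 1)"
    have "c < n \<and> c \<noteq> a \<and> c \<noteq> b \<and> cycle_adj n a c \<and> \<not> cycle_adj n b c"
      using True ab assms unfolding c_def cyc_char[OF assms(1)] by (simp split: if_split) linarith
    then show ?thesis by blast
  next
    case False
    define c where "c = (if a = n - 1 then 0 else a + 1)"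
    have "c < n \<and> c \<noteq> a \<and> c \<noteq> b \<and> cycle_adj n a c \<and> \<not> cycle_adj n b c"
      using False ab assms unfolding c_def cyc_char[OF assms(1)] by (simp split: if_split) linarith
    then show ?thesis by blast
  qed
qed

theorem mainTheorem5:
  fixes n :: nat
  assumes "n > 3"
  shows "skeleton {0..<n} (cycle_adj n)"
  unfolding skeleton_def
proof
  assume "\<exists>(W::nat set) F \<phi>. proper_skeletal_via {0..<n} (cycle_adj n) W F \<phi>"
  then obtain W :: "nat set" and F \<phi> where p: "proper_skeletal_via {0..<n} (cycle_adj n) W F \<phi>"
    by blast
  then have sk: "skeletal_via {0..<n} (cycle_adj n) W F \<phi>" and
    "\<exists>v\<in>W. card {a\<in>{0..<n}. \<phi> a = v} \<ge> 2"
    unfolding proper_skeletal_via_def by auto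
  then obtain v where "card {a\<in>{0..<n}. \<phi> a = v} \<ge> 2" by blast
  moreover have "finite {a\<in>{0..<n}. \<phi> a = v}" by simp
  ultimately have "\<not> (\<forall>a1 \<in> {a\<in>{0..<n}. \<phi> a = v}. \<forall>a2 \<in> {a\<in>{0..<n}. \<phi> a = v}. a1 = a2)"
    using card_le_Suc0_iff_eq[of "{a\<in>{0..<n}. \<phi> a = v}"] by linarith
  then obtain a b where ab: "a \<in> {a\<in>{0..<n}. \<phi> a = v}" "b \<in> {a\<in>{0..<n}. \<phi> a = v}" "a \<noteq> b"
    by blast
  have rel: "\<And>x y. x < n \<Longrightarrow> y < n \<Longrightarrow> x \<noteq> y \<Longrightarrow>
      cycle_adj n x y \<longleftrightarrow> \<phi> x = \<phi> y \<or> F (\<phi> x) (\<phi> y)"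
    using sk unfolding skeletal_via_def by auto
  have "cycle_adj n a b" using rel[of a b] ab by simp
  then obtain c where c: "c < n" "c \<noteq> a" "c \<noteq> b" "cycle_adj n a c" "\<not> cycle_adj n b c"
    using witness[OF assms] by blast
  have "\<phi> a = \<phi> b" using ab by simp
  then have "cycle_adj n b c" using rel[of a c] rel[of b c] c ab by simp
  then show False using c by blast
qed

end
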